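(* Assume Assumption A, let $\mathscr E$ be the union of the recurrent classes of the limiting chain $X_R$ and $\Delta=E\setminus\mathscr E$ its set of transient states. Then for every $\eta\in\Delta$, $$\lim_{t\to\infty}\limsup_{N\to\infty}\mathbb P_\eta\big[H_{\mathscr E}\ge t\,\alpha_N\big]=0.$$
   Context: Setting: $E$ is a fixed finite set; for each $N\ge1$, $(\eta^N_t)$ is a continuous-time irreducible Markov chain on $E$ with jump rates $R_N(\eta,\xi)$; $\mathbb P_\eta$ is its law started at $\eta$ and $H_A=\inf\{t>0:\eta^N_t\in A\}$. Ordered families: a finite family of sequences of positive reals $(a^r_N)$, $r\in\mathfrak R$, is ordered if for all $r\neq s$, $\arctan(a^r_N/a^s_N)$ converges. Assumption A: (i) for each $\eta\neq\xi$, either $R_N(\eta,\xi)=0$ for all $N$ or $R_N(\eta,\xi)>0$ for all $N$; let $\mathbb B$ be the set of pairs with positive rates. (ii) For every $m\ge1$ the family $\prod_{(\eta,\xi)\in\mathbb B}R_N(\eta,\xi)^{k(\eta,\xi)}$, $k:\mathbb B\to\mathbb Z_+$ with $\sum k=m$, is ordered. Limiting chain: $\alpha_N^{-1}=\sum_\eta\sum_{\xi\ne\eta}R_N(\eta,\xi)$; $R(\eta,\xi)=\lim_N\alpha_NR_N(\eta,\xi)\in[0,1]$ (exists under Assumption A); $X_R$ is the Markov chain on $E$ with rates $R$. *)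

theory Defs
  imports "HOL-Probability.Probability"
begin

text \<open>Off-diagonal rates of a chain on a finite state type; the diagonal entries of a rate
  function are ignored everywhere.\<close>

definition generator :: "('e::finite \<Rightarrow> 'e \<Rightarrow> real) \<Rightarrow> 'e \<Rightarrow> 'e \<Rightarrow> real" where
  "generator R x y = (if x = y then - (\<Sum>z\<in>UNIV - {x}. R x z) else R x y)"

fun matpow :: "('e::finite \<Rightarrow> 'e \<Rightarrow> real) \<Rightarrow> nat \<Rightarrow> 'e \<Rightarrow> 'e \<Rightarrow> real" where
  "matpow Q 0 x y = (if x = y then 1 else 0)"
| "matpow Q (Suc k) x y = (\<Sum>z\<in>UNIV. matpow Q k x z * Q z y)"

definition trans_fn :: "('e::finite \<Rightarrow> 'e \<Rightarrow> real) \<Rightarrow> real \<Rightarrow> 'e \<Rightarrow> 'e \<Rightarrow> real" where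
  "trans_fn R t x y = (\<Sum>k. t ^ k / fact k * matpow (generator R) k x y)"

definition ctmc :: "('e::finite \<Rightarrow> 'e \<Rightarrow> real) \<Rightarrow> 'e \<Rightarrow> 'a measure \<Rightarrow> (real \<Rightarrow> 'a \<Rightarrow> 'e) \<Rightarrow> bool" where
  "ctmc R x0 M X \<longleftrightarrow>
     prob_space M \<and>
     (\<forall>t\<ge>0. X t \<in> measurable M (count_space UNIV)) \<and>
     (\<forall>\<omega>\<in>space M. \<forall>t\<ge>0. \<exists>\<delta>>0. \<forall>s. t \<le> s \<and> s < t + \<delta> \<longrightarrow> X s \<omega> = X t \<omega>) \<and>
     (\<forall>(n::nat) (ts::nat \<Rightarrow> real) (xs::nat \<Rightarrow> 'e).
        ts 0 = 0 \<and> (\<forall>i<n. ts i \<le> ts (Suc i)) \<longrightarrow>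
        measure M {\<omega>\<in>space M. \<forall>i\<le>n. X (ts i) \<omega> = xs i}
          = (if xs 0 = x0 then 1 else 0) * (\<Prod>i<n. trans_fn R (ts (Suc i) - ts i) (xs i) (xs (Suc i))))"

text \<open>Hitting time H_A = inf{t > 0 : X_t \<in> A}, with inf of the empty set = \<infinity>.\<close>
definition hit :: "(real \<Rightarrow> 'a \<Rightarrow> 'e) \<Rightarrow> 'e set \<Rightarrow> 'a \<Rightarrow> ereal" where
  "hit X A \<omega> = Inf (ereal ` {t. t > 0 \<and> X t \<omega> \<in> A})"

definition irreducible :: "('e \<Rightarrow> 'e \<Rightarrow> real) \<Rightarrow> bool" where
  "irreducible R \<longleftrightarrow> (\<forall>x y. (x, y) \<in> {(a, b). a \<noteq> b \<and> R a b > 0}\<^sup>*)"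

definition ordered_family :: "'r set \<Rightarrow> ('r \<Rightarrow> nat \<Rightarrow> real) \<Rightarrow> bool" where
  "ordered_family I a \<longleftrightarrow> (\<forall>r\<in>I. \<forall>s\<in>I. r \<noteq> s \<longrightarrow> convergent (\<lambda>N. arctan (a r N / a s N)))"

definition posB :: "(nat \<Rightarrow> 'e \<Rightarrow> 'e \<Rightarrow> real) \<Rightarrow> ('e \<times> 'e) set" where
  "posB R = {(x, y). x \<noteq> y \<and> (\<forall>N. R N x y > 0)}"

definition assumptionA :: "(nat \<Rightarrow> 'e::finite \<Rightarrow> 'e \<Rightarrow> real) \<Rightarrow> bool" where
  "assumptionA R \<longleftrightarrow>
     (\<forall>x y. x \<noteq> y \<longrightarrow> (\<forall>N. R N x y = 0) \<or> (\<forall>N. R N x y > 0)) \<and>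
     (\<forall>m::nat. m \<ge> 1 \<longrightarrow>
        ordered_family {k :: 'e \<times> 'e \<Rightarrow> nat. (\<forall>p. p \<notin> posB R \<longrightarrow> k p = 0) \<and> sum k (posB R) = m}
          (\<lambda>k N. \<Prod>p\<in>posB R. R N (fst p) (snd p) ^ k p))"

definition alpha :: "(nat \<Rightarrow> 'e::finite \<Rightarrow> 'e \<Rightarrow> real) \<Rightarrow> nat \<Rightarrow> real" where
  "alpha R N = 1 / (\<Sum>x\<in>UNIV. \<Sum>y\<in>UNIV - {x}. R N x y)"

definition Rlim :: "(nat \<Rightarrow> 'e::finite \<Rightarrow> 'e \<Rightarrow> real) \<Rightarrow> 'e \<Rightarrow> 'e \<Rightarrow> real" where
  "Rlim R x y = lim (\<lambda>N. alpha R N * R N x y)"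

definition reach :: "('e \<Rightarrow> 'e \<Rightarrow> real) \<Rightarrow> ('e \<times> 'e) set" where
  "reach Q = {(a, b). a \<noteq> b \<and> Q a b > 0}\<^sup>*"

text \<open>Recurrent states of a finite-state chain with rates Q: states whose communicating
  class is closed.\<close>
definition recurrent_states :: "('e \<Rightarrow> 'e \<Rightarrow> real) \<Rightarrow> 'e set" where
  "recurrent_states Q = {x. \<forall>y. (x, y) \<in> reach Q \<longrightarrow> (y, x) \<in> reach Q}"

end

theory Submission
  imports Defs
begin

lemma matpow_scale:
  "matpow (\<lambda>x y. c * Q x y) k x y = c ^ k * matpow Q k x y"
proof (induction k arbitrary: y)
  case 0 then show ?case by simp
next
  case (Suc k)
  show ?case by (simp add: Suc sum_distrib_left algebra_simps)
qed

lemma matpow_bound: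
  fixes Q :: "'e::finite \<Rightarrow> 'e \<Rightarrow> real"
  assumes "\<And>x y. \<bar>Q x y\<bar> \<le> 1"
  shows "\<bar>matpow Q k x y\<bar> \<le> real CARD('e) ^ k"
proof (induction k arbitrary: y)
  case 0 then show ?case by simp
next
  case (Suc k)
  have "\<bar>matpow Q (Suc k) x y\<bar> \<le> (\<Sum>z\<in>UNIV. \<bar>matpow Q k x z * Q z y\<bar>)"
    by (simp add: sum_abs)
  also have "\<dots> \<le> (\<Sum>z\<in>(UNIV::'e set). real CARD('e) ^ k)"
  proof (rule sum_mono)
    fix z :: 'e
    have "\<bar>matpow Q k x z * Q z y\<bar> = \<bar>matpow Q k x z\<bar> * \<bar>Q z y\<bar>" by (simp add: abs_mult)
    also have "\<dots> \<le> real CARD('e) ^ k * 1"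
      by (rule mult_mono) (use Suc assms in auto)
    finally show "\<bar>matpow Q k x z * Q z y\<bar> \<le> real CARD('e) ^ k" by simp
  qed
  also have "\<dots> = real CARD('e) ^ Suc k" by simp
  finally show ?case .
qed

lemma exp_sum: "(\<lambda>n. x ^ n / fact n) sums exp (x::real)"
  using exp_converges[of x] by (simp add: divide_inverse mult.commute scaleR_conv_of_real)

lemma sum_delta_mult: "(\<Sum>z\<in>(UNIV::'e::finite set). (if x = z then 1 else 0) * f z) = (f x::real)"
proof -
  have "(\<Sum>z\<in>(UNIV::'e set). (if x = z then 1 else 0) * f z) = (\<Sum>z\<in>UNIV. if x = z then f z else 0)"
    by (rule sum.cong) auto
  then show ?thesis by simp
qed

lemma trans_fn_lower:
  fixes R :: "'e::finite \<Rightarrow> 'e \<Rightarrow> real"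
  assumes Qb: "\<And>x y. \<bar>a * generator R x y\<bar> \<le> 1" and h: "0 \<le> h" and xy: "x \<noteq> y"
  shows "trans_fn R (h * a) x y \<ge> h * a * R x y - (h * real CARD('e))^2 * exp (h * real CARD('e))"
proof -
  define d where "d = real CARD('e)"
  define Q where "Q = (\<lambda>x y. a * generator R x y)"
  define b where "b = (\<lambda>k. h ^ k / fact k * matpow Q k x y)"
  have tf: "trans_fn R (h * a) x y = suminf b"
    unfolding trans_fn_def b_def Q_def
    by (simp add: matpow_scale power_mult_distrib mult.assoc)
  have bb: "\<bar>b k\<bar> \<le> (h * d) ^ k / fact k" for k
  proof -
    have "\<bar>b k\<bar> = h ^ k / fact k * \<bar>matpow Q k x y\<bar>"
      using h by (simp add: b_def abs_mult)
    also have "\<dots> \<le> h ^ k / fact k * d ^ k"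
      by (rule mult_left_mono) (use matpow_bound[of Q k x y] Qb h in \<open>auto simp: Q_def d_def\<close>)
    finally show ?thesis by (simp add: power_mult_distrib)
  qed
  have se: "summable (\<lambda>k. (h * d) ^ k / fact k)" using exp_sum sums_summable by blast
  have sb: "summable b"
    by (rule summable_rabs_cancel, rule summable_comparison_test[OF _ se]) (use bb in auto)
  have split: "suminf b = (\<Sum>n. b (n + 2)) + (\<Sum>i<2. b i)"
    using suminf_split_initial_segment[OF sb] .
  have b0: "b 0 = 0" using xy by (simp add: b_def)
  have b1: "b 1 = h * a * R x y" using xy by (simp add: b_def Q_def generator_def sum_delta_mult)
  have se2: "summable (\<lambda>n. (h*d)^(n+2)/fact(n+2))"
    using se summable_iff_shift[of "\<lambda>k. (h*d)^k/fact k" 2] by simp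
  have sb2: "summable (\<lambda>n. \<bar>b (n+2)\<bar>)"
    by (rule summable_comparison_test'[OF se2, of 0]) (simp only: real_norm_def abs_abs bb)
  have "\<bar>\<Sum>n. b (n + 2)\<bar> \<le> (\<Sum>n. \<bar>b (n + 2)\<bar>)" by (rule summable_rabs[OF sb2])
  also have "\<dots> \<le> (\<Sum>n. (h*d)^2 * ((h * d) ^ n / fact n))"
  proof (rule suminf_le)
    fix n
    have "\<bar>b (n+2)\<bar> \<le> (h * d) ^ (n+2) / fact (n+2)" by (rule bb)
    also have "\<dots> \<le> (h * d) ^ (n+2) / fact n"
      by (rule divide_left_mono) (use h fact_mono[of n "n+2", where 'a=real] in \<open>auto simp: d_def\<close>)
    also have "\<dots> = (h*d)^2 * ((h * d) ^ n / fact n)" by (simp add: power_add power2_eq_square)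
    finally show "\<bar>b (n+2)\<bar> \<le> (h*d)^2 * ((h * d) ^ n / fact n)" .
  qed (use sb2 summable_mult[OF se, of "(h*d)^2"] in auto)
  also have "\<dots> = (h*d)^2 * exp (h*d)"
    using sums_mult[OF exp_sum, of "(h*d)^2" "h*d"] sums_unique by metis
  finally have "\<bar>\<Sum>n. b (n + 2)\<bar> \<le> (h*d)^2 * exp (h*d)" .
  then show ?thesis using tf split b0 b1 by (simp add: d_def numeral_2_eq_2)
qed

lemma sum_delta_mult': "(\<Sum>z\<in>(UNIV::'e::finite set). (if z = x then 1 else 0) * f z) = (f x::real)"
proof -
  have "(\<Sum>z\<in>(UNIV::'e set). (if z = x then 1 else 0) * f z) = (\<Sum>z\<in>UNIV. if z = x then f z else 0)"
    by (rule sum.cong) auto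
  then show ?thesis by simp
qed

lemma ctmc_prob: "ctmc R x0 M X \<Longrightarrow> prob_space M"
  unfolding ctmc_def by (elim conjE)

lemma ctmc_fdd:
  fixes ts :: "nat \<Rightarrow> real" and R :: "'e::finite \<Rightarrow> 'e \<Rightarrow> real"
  assumes "ctmc R x0 M X" "ts 0 = 0" "\<forall>i<n. ts i \<le> ts (Suc i)"
  shows "measure M {\<omega>\<in>space M. \<forall>i\<le>n. X (ts i) \<omega> = xs i}
          = (if xs 0 = x0 then 1 else 0) * (\<Prod>i<n. trans_fn R (ts (Suc i) - ts i) (xs i) (xs (Suc i)))"
proof -
  have H: "\<forall>(n::nat) (ts::nat \<Rightarrow> real) (xs::nat \<Rightarrow> 'e).
        ts 0 = 0 \<and> (\<forall>i<n. ts i \<le> ts (Suc i)) \<longrightarrow>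
        measure M {\<omega>\<in>space M. \<forall>i\<le>n. X (ts i) \<omega> = xs i}
          = (if xs 0 = x0 then 1 else 0) * (\<Prod>i<n. trans_fn R (ts (Suc i) - ts i) (xs i) (xs (Suc i)))"
    using assms(1) unfolding ctmc_def by (elim conjE)
  show ?thesis using H[rule_format, OF conjI[OF assms(2,3)]] .
qed

lemma ctmc_meas1:
  assumes "ctmc R x0 M X" "t \<ge> 0"
  shows "{\<omega>\<in>space M. X t \<omega> = x} \<in> sets M"
proof -
  have "\<forall>t\<ge>0. X t \<in> measurable M (count_space UNIV)" using assms(1) unfolding ctmc_def by (elim conjE)
  then have m: "X t \<in> measurable M (count_space UNIV)" using assms(2) by blast
  have m2: "X t -` {x} \<inter> space M \<in> sets M" by (rule measurable_sets[OF m]) simp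
  have eq: "{\<omega>\<in>space M. X t \<omega> = x} = X t -` {x} \<inter> space M" by auto
  show ?thesis using m2 unfolding eq .
qed

lemma ctmc_meas:
  fixes ts :: "nat \<Rightarrow> real"
  assumes "ctmc R x0 M X" "\<forall>i\<le>n. ts i \<ge> 0"
  shows "{\<omega>\<in>space M. \<forall>i\<le>n. X (ts i) \<omega> = xs i} \<in> sets M"
proof -
  have m: "{\<omega>\<in>space M. \<forall>i\<in>{..n}. X (ts i) \<omega> = xs i} \<in> sets M"
  proof (rule sets.sets_Collect_finite_All)
    fix i assume "i \<in> {..n}"
    then have "ts i \<ge> 0" using assms(2) by simp
    then show "{\<omega>\<in>space M. X (ts i) \<omega> = xs i} \<in> sets M"
      by (rule ctmc_meas1[OF assms(1)])
  next
    show "finite {..n}" by (rule finite_atMost)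
  qed
  have eq: "{\<omega>\<in>space M. \<forall>i\<in>{..n}. X (ts i) \<omega> = xs i} = {\<omega>\<in>space M. \<forall>i\<le>n. X (ts i) \<omega> = xs i}"
    unfolding atMost_def by blast
  show ?thesis using m unfolding eq .
qed

lemma trans_nonneg_sum:
  fixes R :: "'e::finite \<Rightarrow> 'e \<Rightarrow> real"
  assumes c: "ctmc R x M X" and s: "s \<ge> 0"
  shows "trans_fn R s x y \<ge> 0" and "(\<Sum>y\<in>UNIV. trans_fn R s x y) \<le> 1"
proof -
  define ts where "ts = (\<lambda>i::nat. if i = 0 then 0 else s)"
  define A where "A = (\<lambda>y. {\<omega>\<in>space M. \<forall>i\<le>1. X (ts i) \<omega> = (if i = 0 then x else y)})"
  have ts0: "ts 0 = 0" by (simp add: ts_def)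
  have tsm: "\<forall>i<1. ts i \<le> ts (Suc i)" using s by (simp add: ts_def)
  have mA: "measure M (A y) = trans_fn R s x y" for y
  proof -
    let ?xs = "\<lambda>i::nat. if i = 0 then x else y"
    have "measure M (A y) = (if ?xs 0 = x then 1 else 0) *
       (\<Prod>i<1. trans_fn R (ts (Suc i) - ts i) (?xs i) (?xs (Suc i)))"
      unfolding A_def by (rule ctmc_fdd[OF c ts0 tsm])
    then show ?thesis by (simp add: ts_def)
  qed
  have sA: "A y \<in> sets M" for y
    unfolding A_def by (rule ctmc_meas[OF c]) (use s in \<open>simp add: ts_def\<close>)
  show "trans_fn R s x y \<ge> 0" using mA[of y] by (metis measure_nonneg)
  have P: "prob_space M" by (rule ctmc_prob[OF c])
  have Asub: "A y \<subseteq> {\<omega>. X s \<omega> = y}" for y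
  proof
    fix \<omega> assume "\<omega> \<in> A y"
    then have "X (ts 1) \<omega> = y" unfolding A_def by fastforce
    then show "\<omega> \<in> {\<omega>. X s \<omega> = y}" by (simp add: ts_def)
  qed
  have dj: "disjoint_family_on A UNIV"
    unfolding disjoint_family_on_def using Asub by blast
  have "(\<Sum>y\<in>UNIV. trans_fn R s x y) = (\<Sum>y\<in>UNIV. measure M (A y))" by (simp add: mA)
  also have "\<dots> = measure M (\<Union>y\<in>UNIV. A y)"
    by (rule finite_measure.finite_measure_finite_Union[symmetric, OF prob_space.finite_measure[OF P] finite _ dj])
       (use sA in blast)
  also have "\<dots> \<le> 1" by (rule prob_space.prob_le_1[OF P])
  finally show "(\<Sum>y\<in>UNIV. trans_fn R s x y) \<le> 1" .
qed

fun pathw :: "('e \<Rightarrow> 'e \<Rightarrow> real) \<Rightarrow> 'e \<Rightarrow> 'e list \<Rightarrow> real" where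
  "pathw P x [] = 1"
| "pathw P x (y # ys) = P x y * pathw P y ys"

lemma pathw_prod: "(\<Prod>i<length ys. P ((x#ys)!i) ((x#ys)!Suc i)) = pathw P x ys"
proof (induction ys arbitrary: x)
  case Nil then show ?case by simp
next
  case (Cons y ys)
  show ?case
    using Cons[of y] by (simp add: prod.lessThan_Suc_shift del: prod.lessThan_Suc)
qed

definition Lset :: "'e set \<Rightarrow> nat \<Rightarrow> 'e list set" where
  "Lset D n = {ys. set ys \<subseteq> D \<and> length ys = n}"

definition Top :: "('e \<Rightarrow> 'e \<Rightarrow> real) \<Rightarrow> 'e set \<Rightarrow> ('e \<Rightarrow> real) \<Rightarrow> 'e \<Rightarrow> real" where
  "Top P D f x = (\<Sum>y\<in>D. P x y * f y)"

lemma Lset_finite: "finite D \<Longrightarrow> finite (Lset D n)"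
  unfolding Lset_def by (rule finite_lists_length_eq)

lemma Lset_Suc: "Lset D (Suc n) = (\<lambda>(y, ys). y # ys) ` (D \<times> Lset D n)"
proof
  show "Lset D (Suc n) \<subseteq> (\<lambda>(y, ys). y # ys) ` (D \<times> Lset D n)"
  proof
    fix zs assume "zs \<in> Lset D (Suc n)"
    then obtain y ys where "zs = y # ys" "y \<in> D" "ys \<in> Lset D n"
      unfolding Lset_def by (cases zs) auto
    then show "zs \<in> (\<lambda>(y, ys). y # ys) ` (D \<times> Lset D n)" by force
  qed
qed (auto simp: Lset_def)

lemma Top_paths:
  assumes "finite D"
  shows "(Top P D ^^ n) (\<lambda>_. 1) x = (\<Sum>ys\<in>Lset D n. pathw P x ys)"
proof (induction n arbitrary: x)
  case 0
  have "Lset D 0 = {[]}" by (auto simp: Lset_def)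
  then show ?case by simp
next
  case (Suc n)
  have inj: "inj_on (\<lambda>(y, ys). y # ys) (D \<times> Lset D n)" by (auto simp: inj_on_def)
  have "(Top P D ^^ Suc n) (\<lambda>_. 1) x = (\<Sum>y\<in>D. P x y * (\<Sum>ys\<in>Lset D n. pathw P y ys))"
    by (simp add: Top_def Suc)
  also have "\<dots> = (\<Sum>y\<in>D. \<Sum>ys\<in>Lset D n. pathw P x (y # ys))"
    by (simp add: sum_distrib_left)
  also have "\<dots> = (\<Sum>(y, ys)\<in>D \<times> Lset D n. pathw P x (y # ys))"
    by (rule sum.cartesian_product)
  also have "\<dots> = (\<Sum>p\<in>D \<times> Lset D n. pathw P x ((\<lambda>(y, ys). y # ys) p))"
    by (rule sum.cong) auto
  also have "\<dots> = (\<Sum>zs\<in>(\<lambda>(y, ys). y # ys) ` (D \<times> Lset D n). pathw P x zs)"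
    by (simp only: sum.reindex[OF inj] comp_def)
  also have "\<dots> = (\<Sum>zs\<in>Lset D (Suc n). pathw P x zs)"
    by (simp only: Lset_Suc)
  finally show ?case .
qed

lemma measure_paths:
  fixes R :: "'e::finite \<Rightarrow> 'e \<Rightarrow> real"
  assumes c: "ctmc R x0 M X" and d: "\<delta> > 0"
    and S: "S \<subseteq> {\<omega>\<in>space M. \<forall>i\<in>{1..n}. X (real i * \<delta>) \<omega> \<in> D}"
  shows "measure M S \<le> (\<Sum>ys\<in>Lset D n. pathw (trans_fn R \<delta>) x0 ys)"
proof -
  define ts where "ts = (\<lambda>i::nat. real i * \<delta>)"
  define A where "A = (\<lambda>(z::'e, ys). {\<omega>\<in>space M. \<forall>i\<le>n. X (ts i) \<omega> = (z#ys)!i})"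
  define I where "I = (UNIV::'e set) \<times> Lset D n"
  have fI: "finite I" unfolding I_def by (simp add: Lset_finite)
  have sA: "A p \<in> sets M" for p
  proof -
    obtain z ys where p: "p = (z, ys)" by (cases p)
    have "A p = {\<omega>\<in>space M. \<forall>i\<le>n. X (ts i) \<omega> = (z#ys)!i}" by (simp add: p A_def)
    also have "\<dots> \<in> sets M"
      by (rule ctmc_meas[OF c]) (use d in \<open>simp add: ts_def\<close>)
    finally show ?thesis .
  qed
  have P: "prob_space M" by (rule ctmc_prob[OF c])
  have sub: "S \<subseteq> (\<Union>p\<in>I. A p)"
  proof
    fix \<omega> assume w: "\<omega> \<in> S"
    define ys where "ys = map (\<lambda>i. X (real (Suc i) * \<delta>) \<omega>) [0..<n]"
    have wD: "\<forall>i\<in>{1..n}. X (real i * \<delta>) \<omega> \<in> D" and ws: "\<omega> \<in> space M" using w S by auto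
    have "ys \<in> Lset D n" unfolding Lset_def ys_def
    proof (auto)
      fix j assume "j < n"
      then show "X ((1 + real j) * \<delta>) \<omega> \<in> D" using bspec[OF wD, of "Suc j"] by simp
    qed
    moreover have "\<forall>i\<le>n. X (ts i) \<omega> = (X 0 \<omega> # ys) ! i"
    proof (intro allI impI)
      fix i assume i: "i \<le> n"
      show "X (ts i) \<omega> = (X 0 \<omega> # ys) ! i"
      proof (cases i)
        case 0 then show ?thesis by (simp add: ts_def)
      next
        case (Suc j)
        then have "j < n" using i by simp
        then show ?thesis using Suc by (simp add: ts_def ys_def)
      qed
    qed
    then have "\<omega> \<in> A (X 0 \<omega>, ys)" using ws unfolding A_def by simp
    ultimately show "\<omega> \<in> (\<Union>p\<in>I. A p)" unfolding I_def by blast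
  qed
  have "measure M S \<le> measure M (\<Union>p\<in>I. A p)"
  proof (cases "S \<in> sets M")
    case True
    show ?thesis
      by (rule finite_measure.finite_measure_mono[OF prob_space.finite_measure[OF P] sub])
         (rule sets.finite_UN[OF fI sA])
  next
    case False then show ?thesis by (simp add: measure_notin_sets)
  qed
  also have "\<dots> \<le> (\<Sum>p\<in>I. measure M (A p))"
    by (rule measure_UNION_le[OF fI sA])
  also have "\<dots> = (\<Sum>(z, ys)\<in>I. (if z = x0 then 1 else 0) * pathw (trans_fn R \<delta>) z ys)"
  proof (rule sum.cong[OF refl])
    fix p assume "p \<in> I"
    then obtain z ys where p: "p = (z, ys)" and len: "length ys = n" unfolding I_def Lset_def by auto
    have dts: "ts (Suc i) - ts i = \<delta>" for i by (simp add: ts_def algebra_simps)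
    have ts0: "ts 0 = 0" by (simp add: ts_def)
    have tsm: "\<forall>i<n. ts i \<le> ts (Suc i)" using d by (simp add: ts_def)
    have "A p = {\<omega>\<in>space M. \<forall>i\<le>n. X (ts i) \<omega> = (z#ys)!i}" by (simp add: p A_def)
    then have "measure M (A p) = measure M {\<omega>\<in>space M. \<forall>i\<le>n. X (ts i) \<omega> = (z#ys)!i}" by simp
    also have "\<dots> = (if (z#ys)!0 = x0 then 1 else 0) *
        (\<Prod>i<n. trans_fn R (ts (Suc i) - ts i) ((z#ys)!i) ((z#ys)!Suc i))"
      by (rule ctmc_fdd[OF c ts0 tsm, of "\<lambda>i. (z#ys)!i"])
    also have "\<dots> = (if z = x0 then 1 else 0) * (\<Prod>i<length ys. trans_fn R \<delta> ((z#ys)!i) ((z#ys)!Suc i))"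
      by (simp only: dts len nth_Cons_0)
    also have "\<dots> = (if z = x0 then 1 else 0) * pathw (trans_fn R \<delta>) z ys"
      by (simp only: pathw_prod)
    finally show "measure M (A p) = (case p of (z, ys) \<Rightarrow> (if z = x0 then 1 else 0) * pathw (trans_fn R \<delta>) z ys)"
      by (simp only: p prod.case)
  qed
  also have "\<dots> = (\<Sum>z\<in>UNIV. \<Sum>ys\<in>Lset D n. (if z = x0 then 1 else 0) * pathw (trans_fn R \<delta>) z ys)"
    unfolding I_def by (rule sum.cartesian_product[symmetric])
  also have "\<dots> = (\<Sum>z\<in>UNIV. (if z = x0 then 1 else 0) * (\<Sum>ys\<in>Lset D n. pathw (trans_fn R \<delta>) z ys))"
    by (simp only: sum_distrib_left)
  also have "\<dots> = (\<Sum>ys\<in>Lset D n. pathw (trans_fn R \<delta>) x0 ys)"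
    by (rule sum_delta_mult')
  finally show ?thesis .
qed

lemma Top_apply: "Top P D f x = (\<Sum>y\<in>D. P x y * f y)"
  unfolding Top_def by simp

lemma Top_Suc: "(Top P D ^^ Suc m) g x = (\<Sum>y\<in>D. P x y * (Top P D ^^ m) g y)"
proof -
  have "(Top P D ^^ Suc m) g x = Top P D ((Top P D ^^ m) g) x" by (simp only: funpow.simps comp_apply)
  also have "\<dots> = (\<Sum>y\<in>D. P x y * (Top P D ^^ m) g y)" by (rule Top_apply)
  finally show ?thesis .
qed

lemma Top_mono:
  assumes P: "\<And>x y. P x y \<ge> 0" and fg: "\<forall>z\<in>D. f z \<le> g z"
  shows "\<forall>z\<in>D. (Top P D ^^ m) f z \<le> (Top P D ^^ m) g z"
proof (induction m)
  case 0 then show ?case using fg by simp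
next
  case (Suc m)
  show ?case
  proof
    fix z assume "z \<in> D"
    have "(\<Sum>y\<in>D. P z y * (Top P D ^^ m) f y) \<le> (\<Sum>y\<in>D. P z y * (Top P D ^^ m) g y)"
      by (rule sum_mono, rule mult_left_mono) (use Suc P in auto)
    then show "(Top P D ^^ Suc m) f z \<le> (Top P D ^^ Suc m) g z" by (simp only: Top_Suc)
  qed
qed

lemma Top_homog: "(Top P D ^^ m) (\<lambda>z. c * f z) x = c * (Top P D ^^ m) f x"
proof (induction m arbitrary: x)
  case 0 then show ?case by simp
next
  case (Suc m)
  show ?case by (simp only: Top_Suc Suc sum_distrib_left) (simp add: algebra_simps)
qed

lemma Top_bounds:
  fixes P :: "'e::finite \<Rightarrow> 'e \<Rightarrow> real"
  assumes P: "\<And>x y. P x y \<ge> 0" and S: "\<And>x. (\<Sum>y\<in>UNIV. P x y) \<le> 1"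
  shows "0 \<le> (Top P D ^^ m) (\<lambda>_. 1) x \<and> (Top P D ^^ m) (\<lambda>_. 1) x \<le> 1"
proof (induction m arbitrary: x)
  case 0 then show ?case by simp
next
  case (Suc m)
  let ?g = "(Top P D ^^ m) (\<lambda>_. 1)"
  have "(\<Sum>y\<in>D. P x y * ?g y) \<ge> 0"
    by (rule sum_nonneg) (use Suc P in simp)
  moreover have "(\<Sum>y\<in>D. P x y * ?g y) \<le> (\<Sum>y\<in>D. P x y)"
    by (rule sum_mono) (use Suc P in \<open>simp add: mult_left_le\<close>)
  moreover have "(\<Sum>y\<in>D. P x y) \<le> (\<Sum>y\<in>UNIV. P x y)"
    by (rule sum_mono2) (use P in auto)
  ultimately show ?case using S[of x] unfolding Top_Suc by linarith
qed

lemma Top_dec: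
  fixes P :: "'e::finite \<Rightarrow> 'e \<Rightarrow> real"
  assumes P: "\<And>x y. P x y \<ge> 0" and S: "\<And>x. (\<Sum>y\<in>UNIV. P x y) \<le> 1"
  shows "\<forall>z\<in>D. (Top P D ^^ Suc m) (\<lambda>_. 1) z \<le> (Top P D ^^ m) (\<lambda>_. 1) z"
proof -
  have "\<forall>z\<in>D. Top P D (\<lambda>_. 1) z \<le> 1"
    using Top_bounds[of P, OF P S, where D=D and m=1] by simp
  then have "\<forall>z\<in>D. (Top P D ^^ m) (Top P D (\<lambda>_. 1)) z \<le> (Top P D ^^ m) (\<lambda>_. 1) z"
    by (intro Top_mono[OF P]) simp
  then show ?thesis by (simp add: funpow_Suc_right del: funpow.simps)
qed

lemma Top_antimono:
  fixes P :: "'e::finite \<Rightarrow> 'e \<Rightarrow> real"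
  assumes P: "\<And>x y. P x y \<ge> 0" and S: "\<And>x. (\<Sum>y\<in>UNIV. P x y) \<le> 1"
    and mm: "m \<le> m'" and z: "z \<in> D"
  shows "(Top P D ^^ m') (\<lambda>_. 1) z \<le> (Top P D ^^ m) (\<lambda>_. 1) z"
  using mm
proof (induction m' rule: dec_induct)
  case base then show ?case by simp
next
  case (step k)
  then show ?case using Top_dec[of P, OF P S, where D=D and m=k] z by fastforce
qed

lemma reach_recurrent:
  fixes Q :: "'e::finite \<Rightarrow> 'e \<Rightarrow> real"
  shows "\<exists>e. e \<in> recurrent_states Q \<and> (x, e) \<in> reach Q"
proof -
  define Rs where "Rs = (\<lambda>y. {z. (y, z) \<in> reach Q})"
  have xx: "(x, x) \<in> reach Q" unfolding reach_def by simp
  obtain y where y: "(x, y) \<in> reach Q" and ymin: "\<And>z. (x, z) \<in> reach Q \<Longrightarrow> card (Rs y) \<le> card (Rs z)"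
    using ex_has_least_nat[of "\<lambda>y. (x, y) \<in> reach Q" x "\<lambda>y. card (Rs y)"] xx by blast
  have trans: "(a, b) \<in> reach Q \<Longrightarrow> (b, c) \<in> reach Q \<Longrightarrow> (a, c) \<in> reach Q" for a b c
    unfolding reach_def by (rule rtrancl_trans)
  have "y \<in> recurrent_states Q"
    unfolding recurrent_states_def
  proof (intro CollectI allI impI)
    fix z assume yz: "(y, z) \<in> reach Q"
    have "(x, z) \<in> reach Q" using trans[OF y yz] .
    then have c1: "card (Rs y) \<le> card (Rs z)" by (rule ymin)
    have sub: "Rs z \<subseteq> Rs y" unfolding Rs_def using trans[OF yz] by blast
    have "Rs z = Rs y" by (rule card_subset_eq[OF finite sub]) (use c1 card_mono[OF finite sub] in simp)
    moreover have "y \<in> Rs y" unfolding Rs_def reach_def by simp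
    ultimately show "(z, y) \<in> reach Q" unfolding Rs_def by blast
  qed
  then show ?thesis using y by blast
qed

lemma arctan_conv_cases:
  fixes f :: "nat \<Rightarrow> real"
  assumes pos: "\<And>N. f N > 0" and conv: "convergent (\<lambda>N. arctan (f N))"
  shows "(\<exists>L. f \<longlonglongrightarrow> L) \<or> filterlim f at_top sequentially"
proof -
  obtain \<theta> where th: "(\<lambda>N. arctan (f N)) \<longlonglongrightarrow> \<theta>" using conv unfolding convergent_def by blast
  have au: "arctan (f n) \<le> pi/2" for n using arctan_ubound[of "f n"] by linarith
  have ub: "\<theta> \<le> pi/2"
    by (rule LIMSEQ_le_const2[OF th]) (use au in blast)
  have lb: "0 \<le> \<theta>"
    by (rule LIMSEQ_le_const[OF th]) (use pos in \<open>auto intro: less_imp_le simp: arctan_less_iff[of 0, simplified]\<close>)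
  show ?thesis
  proof (cases "\<theta> < pi/2")
    case True
    have "cos \<theta> > 0" by (rule cos_gt_zero_pi) (use lb True in \<open>auto intro: less_le_trans[of _ 0]\<close>)
    then have "isCont tan \<theta>" by (intro isCont_tan) simp
    then have "(\<lambda>N. tan (arctan (f N))) \<longlonglongrightarrow> tan \<theta>" by (rule isCont_tendsto_compose[OF _ th])
    then have "f \<longlonglongrightarrow> tan \<theta>" by (simp add: tan_arctan)
    then show ?thesis by blast
  next
    case False
    then have eq: "\<theta> = pi/2" using ub by simp
    have "\<forall>Z. \<forall>\<^sub>F N in sequentially. Z < f N"
    proof
      fix Z :: real
      have "arctan Z < \<theta>" using arctan_ubound[of Z] eq by simp
      then have "\<forall>\<^sub>F N in sequentially. arctan Z < arctan (f N)" by (rule order_tendstoD(1)[OF th])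
      then show "\<forall>\<^sub>F N in sequentially. Z < f N" by (simp add: arctan_less_iff)
    qed
    then show ?thesis by (simp add: filterlim_at_top_dense)
  qed
qed

lemma rate_conv:
  fixes R :: "nat \<Rightarrow> 'e::finite \<Rightarrow> 'e \<Rightarrow> real"
  assumes nonneg: "\<And>N x y. x \<noteq> y \<Longrightarrow> R N x y \<ge> 0" and A: "assumptionA R" and xy: "x \<noteq> y"
  shows "convergent (\<lambda>N. alpha R N * R N x y)"
proof -
  have A1: "\<And>a b. a \<noteq> b \<Longrightarrow> (\<forall>N. R N a b = 0) \<or> (\<forall>N. R N a b > 0)"
    using A unfolding assumptionA_def by blast
  have A2: "ordered_family {k :: 'e \<times> 'e \<Rightarrow> nat. (\<forall>p. p \<notin> posB R \<longrightarrow> k p = 0) \<and> sum k (posB R) = 1}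
          (\<lambda>k N. \<Prod>p\<in>posB R. R N (fst p) (snd p) ^ k p)"
    using A unfolding assumptionA_def by simp
  show ?thesis
  proof (cases "\<forall>N. R N x y = 0")
    case True then show ?thesis by (simp add: convergent_const)
  next
    case False
    then have posxy: "\<forall>N. R N x y > 0" using A1[OF xy] by blast
    define p where "p = (x, y)"
    define B where "B = posB R"
    define Off where "Off = Sigma (UNIV::'e set) (\<lambda>a. UNIV - {a})"
    define RR where "RR = (\<lambda>q N. R N (fst q) (snd q))"
    define r where "r = (\<lambda>q N. RR q N / RR p N)"
    have pB: "p \<in> B" using posxy xy unfolding p_def B_def posB_def by simp
    have pO: "p \<in> Off" using xy unfolding p_def Off_def by simp
    have RRp: "RR p N > 0" for N using posxy unfolding RR_def p_def by simp
    have RRnn: "q \<in> Off \<Longrightarrow> RR q N \<ge> 0" for q N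
      using nonneg unfolding RR_def Off_def by (cases q) auto
    have rnn: "q \<in> Off \<Longrightarrow> r q N \<ge> 0" for q N
      unfolding r_def using RRnn[of q N] RRp[of N] by simp
    have hS: "(\<Sum>a\<in>UNIV. \<Sum>b\<in>UNIV - {a}. R N a b) = (\<Sum>q\<in>Off. RR q N)" for N
      unfolding Off_def RR_def by (simp add: sum.Sigma split_beta)
    have key: "alpha R N * R N x y = 1 / (\<Sum>q\<in>Off. r q N)" for N
    proof -
      have "(\<Sum>q\<in>Off. r q N) = (\<Sum>q\<in>Off. RR q N) / RR p N"
        unfolding r_def by (simp add: sum_divide_distrib)
      then show ?thesis
        unfolding alpha_def hS using RRp[of N] by (simp add: RR_def p_def)
    qed
    have cases_q: "(\<exists>L. r q \<longlonglongrightarrow> L) \<or> filterlim (r q) at_top sequentially" if qO: "q \<in> Off" for q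
    proof (cases "q = p")
      case True
      then have "r q = (\<lambda>N. 1)" unfolding r_def using RRp by (auto simp: fun_eq_iff) (metis less_irrefl)
      then show ?thesis by auto
    next
      case qp: False
      obtain a b where q: "q = (a, b)" and ab: "a \<noteq> b" using qO unfolding Off_def by auto
      show ?thesis
      proof (cases "\<forall>N. R N a b = 0")
        case True
        then have "r q = (\<lambda>N. 0)" unfolding r_def RR_def q by (auto simp: fun_eq_iff)
        then show ?thesis by auto
      next
        case False
        then have posab: "\<forall>N. R N a b > 0" using A1[OF ab] by blast
        then have qB: "q \<in> B" unfolding B_def posB_def q using ab by simp
        define kq where "kq = (\<lambda>p'::'e \<times> 'e. if p' = q then 1 else (0::nat))"
        define kp where "kp = (\<lambda>p'::'e \<times> 'e. if p' = p then 1 else (0::nat))"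
        have fB: "finite B" by simp
        have kqK: "kq \<in> {k :: 'e \<times> 'e \<Rightarrow> nat. (\<forall>p. p \<notin> posB R \<longrightarrow> k p = 0) \<and> sum k (posB R) = 1}"
          using qB fB unfolding kq_def B_def by (auto simp: sum.delta)
        have kpK: "kp \<in> {k :: 'e \<times> 'e \<Rightarrow> nat. (\<forall>p. p \<notin> posB R \<longrightarrow> k p = 0) \<and> sum k (posB R) = 1}"
          using pB fB unfolding kp_def B_def by (auto simp: sum.delta)
        have kne: "kq \<noteq> kp" using qp unfolding kq_def kp_def by (metis one_neq_zero)
        have prodk: "(\<Prod>p'\<in>B. R N (fst p') (snd p') ^ (if p' = c then 1 else 0)) = RR c N"
          if "c \<in> B" for c N
        proof -
          have "(\<Prod>p'\<in>B. R N (fst p') (snd p') ^ (if p' = c then 1 else 0))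
              = (\<Prod>p'\<in>B. if p' = c then R N (fst p') (snd p') else 1)"
            by (rule prod.cong) auto
          also have "\<dots> = RR c N" using that fB by (simp add: prod.delta RR_def)
          finally show ?thesis .
        qed
        have "convergent (\<lambda>N. arctan ((\<Prod>p'\<in>posB R. R N (fst p') (snd p') ^ kq p') /
                                     (\<Prod>p'\<in>posB R. R N (fst p') (snd p') ^ kp p')))"
          using A2 kqK kpK kne unfolding ordered_family_def by blast
        then have "convergent (\<lambda>N. arctan (r q N))"
          unfolding r_def kq_def kp_def B_def[symmetric] using prodk[OF qB] prodk[OF pB] by simp
        moreover have "r q N > 0" for N
          unfolding r_def RR_def q using posab RRp[of N] by (simp add: RR_def)
        ultimately show ?thesis using arctan_conv_cases[of "r q"] by blast
      qed
    qed
    show ?thesis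
    proof (cases "\<forall>q\<in>Off. \<exists>L. r q \<longlonglongrightarrow> L")
      case True
      then obtain Lf where Lf: "\<forall>q\<in>Off. r q \<longlonglongrightarrow> Lf q" by metis
      have sumlim: "(\<lambda>N. \<Sum>q\<in>Off. r q N) \<longlonglongrightarrow> (\<Sum>q\<in>Off. Lf q)"
        by (rule tendsto_sum) (use Lf in auto)
      have Lnn: "q \<in> Off \<Longrightarrow> Lf q \<ge> 0" for q
        by (rule LIMSEQ_le_const[of "r q"]) (use Lf rnn in auto)
      have "r p = (\<lambda>N. 1)" unfolding r_def using RRp by (auto simp: fun_eq_iff) (metis less_irrefl)
      then have Lp: "Lf p = 1" using Lf pO LIMSEQ_unique[of "\<lambda>N. 1::real" 1 "Lf p"] by auto
      have "Lf p \<le> (\<Sum>q\<in>Off. Lf q)" by (rule member_le_sum) (use Lnn pO in auto)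
      then have Lpos: "(\<Sum>q\<in>Off. Lf q) \<noteq> 0" using Lp by simp
      have "(\<lambda>N. 1 / (\<Sum>q\<in>Off. r q N)) \<longlonglongrightarrow> 1 / (\<Sum>q\<in>Off. Lf q)"
        by (rule tendsto_divide[OF tendsto_const sumlim Lpos])
      then show ?thesis unfolding key convergent_def by blast
    next
      case False
      then obtain q where qO: "q \<in> Off" and nq: "\<not> (\<exists>L. r q \<longlonglongrightarrow> L)" by blast
      then have fq: "filterlim (r q) at_top sequentially" using cases_q by blast
      have "r q N \<le> (\<Sum>q\<in>Off. r q N)" for N by (rule member_le_sum) (use rnn qO in auto)
      then have "filterlim (\<lambda>N. \<Sum>q\<in>Off. r q N) at_top sequentially"
        by (intro filterlim_at_top_mono[OF fq]) auto
      then have "(\<lambda>N. inverse (\<Sum>q\<in>Off. r q N)) \<longlonglongrightarrow> 0" by (rule tendsto_inverse_0_at_top)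
      then show ?thesis unfolding key convergent_def by (auto simp: inverse_eq_divide)
    qed
  qed
qed

theorem mainTheorem16:
  fixes R :: "nat \<Rightarrow> 'e::finite \<Rightarrow> 'e \<Rightarrow> real"
    and M :: "nat \<Rightarrow> 'e \<Rightarrow> 'a measure"
    and X :: "nat \<Rightarrow> 'e \<Rightarrow> real \<Rightarrow> 'a \<Rightarrow> 'e"
    and \<eta> :: 'e
  assumes nonneg: "\<And>N x y. x \<noteq> y \<Longrightarrow> R N x y \<ge> 0"
    and irred: "\<And>N. irreducible (R N)"
    and A: "assumptionA R"
    and chain: "\<And>N \<xi>. ctmc (R N) \<xi> (M N \<xi>) (X N \<xi>)"
    and transient: "\<eta> \<in> UNIV - recurrent_states (Rlim R)"
  shows "((\<lambda>t. limsup (\<lambda>N. ereal (measure (M N \<eta>)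
            {\<omega> \<in> space (M N \<eta>). hit (X N \<eta>) (recurrent_states (Rlim R)) \<omega> \<ge> ereal (t * alpha R N)})))
          \<longlongrightarrow> 0) at_top"
proof -
  define E where "E = recurrent_states (Rlim R)"
  define Dl where "Dl = UNIV - E"
  define d where "d = real CARD('e)"
  define G where "G = {(a, b). a \<noteq> b \<and> Rlim R a b > 0}"
  define TT where "TT = (\<lambda>N. (\<Sum>a\<in>UNIV. \<Sum>b\<in>UNIV - {a}. R N a b))"
  have etaD: "\<eta> \<in> Dl" using transient unfolding Dl_def E_def .
  have fDl: "finite Dl" by simp
  have reachG: "reach (Rlim R) = G\<^sup>*" unfolding reach_def G_def ..
  have conv: "(\<lambda>N. alpha R N * R N a b) \<longlonglongrightarrow> Rlim R a b" if "a \<noteq> b" for a b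
    using rate_conv[OF nonneg A that] unfolding Rlim_def by (simp add: convergent_LIMSEQ_iff)
  have rowle: "(\<Sum>b\<in>UNIV - {a}. R N a b) \<le> TT N" for N a
    unfolding TT_def by (rule member_le_sum) (auto intro!: sum_nonneg nonneg)
  have entle: "R N a b \<le> TT N" if "a \<noteq> b" for N a b
  proof -
    have "R N a b \<le> (\<Sum>b\<in>UNIV - {a}. R N a b)"
      by (rule member_le_sum) (use that nonneg in auto)
    then show ?thesis using rowle[of N a] by linarith
  qed
  obtain e0 where e0: "e0 \<in> E" "(\<eta>, e0) \<in> reach (Rlim R)"
    using reach_recurrent[of "Rlim R" \<eta>] unfolding E_def by blast
  have etae: "\<eta> \<noteq> e0" using e0(1) etaD unfolding Dl_def by auto
  have TTpos: "TT N > 0" for N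
  proof -
    have "(\<eta>, e0) \<in> {(a, b). a \<noteq> b \<and> R N a b > 0}\<^sup>*"
      using irred[of N] unfolding irreducible_def by blast
    then obtain b where "(\<eta>, b) \<in> {(a, b). a \<noteq> b \<and> R N a b > 0}"
      using etae by (metis converse_rtranclE)
    then have "\<eta> \<noteq> b" "R N \<eta> b > 0" by auto
    then show ?thesis using entle[where N=N and a=\<eta> and b=b] by linarith
  qed
  have alpha_eq: "alpha R N = 1 / TT N" for N unfolding alpha_def TT_def ..
  have alpha_pos: "alpha R N > 0" for N using TTpos[of N] by (simp add: alpha_eq)
  have Qb: "\<bar>alpha R N * generator (R N) a b\<bar> \<le> 1" for N a b
  proof (cases "a = b")
    case True
    have "0 \<le> (\<Sum>z\<in>UNIV - {a}. R N a z)" by (rule sum_nonneg) (auto intro: nonneg)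
    moreover have "(\<Sum>z\<in>UNIV - {a}. R N a z) \<le> TT N" by (rule rowle)
    ultimately show ?thesis using True TTpos[of N]
      by (simp add: generator_def alpha_eq abs_mult divide_le_eq_1)
  next
    case False
    then show ?thesis using nonneg[OF False, of N] entle[OF False, of N] TTpos[of N]
      by (simp add: generator_def alpha_eq abs_mult divide_le_eq_1)
  qed
  define r0 where "r0 = (if G = {} then 1 else Min ((\<lambda>q. Rlim R (fst q) (snd q)) ` G))"
  have r0pos: "r0 > 0"
  proof (cases "G = {}")
    case True then show ?thesis by (simp add: r0_def)
  next
    case False
    have "finite G" by simp
    then show ?thesis using False unfolding r0_def by (auto simp: G_def)
  qed
  have r0le: "r0 \<le> Rlim R a b" if "(a, b) \<in> G" for a b
  proof -
    have "G \<noteq> {}" using that by auto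
    have mem: "Rlim R a b \<in> (\<lambda>q. Rlim R (fst q) (snd q)) ` G"
      by (rule image_eqI[where x="(a, b)"]) (simp_all add: that)
    have fin: "finite ((\<lambda>q. Rlim R (fst q) (snd q)) ` G)" by (rule finite_imageI) simp
    have "Min ((\<lambda>q. Rlim R (fst q) (snd q)) ` G) \<le> Rlim R a b"
      by (rule Min_le[OF fin mem])
    moreover have "r0 = Min ((\<lambda>q. Rlim R (fst q) (snd q)) ` G)"
      unfolding r0_def using \<open>G \<noteq> {}\<close> by (rule if_not_P)
    ultimately show ?thesis by simp
  qed
  have d1: "d \<ge> 1" unfolding d_def by simp
  define C where "C = d^2 * exp d"
  have Cpos: "C > 0" unfolding C_def using d1 by simp
  define h where "h = min 1 (r0 / (4 * C))"
  have hpos: "h > 0" unfolding h_def using r0pos Cpos by simp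
  have h1: "h \<le> 1" unfolding h_def by simp
  have hC: "h * C \<le> r0 / 4" unfolding h_def using Cpos r0pos
    by (auto simp: min_def field_simps)
  define p0 where "p0 = min (1/2) (h * r0 / 4)"
  have p0pos: "p0 > 0" unfolding p0_def using hpos r0pos by simp
  have p01: "p0 \<le> 1" unfolding p0_def by simp
  define P where "P = (\<lambda>N. trans_fn (R N) (h * alpha R N))"
  have Pnn: "P N a b \<ge> 0" for N a b
    unfolding P_def by (rule trans_nonneg_sum(1)[OF chain]) (use hpos alpha_pos[of N] in simp)
  have Psum: "(\<Sum>b\<in>UNIV. P N a b) \<le> 1" for N a
    unfolding P_def by (rule trans_nonneg_sum(2)[OF chain]) (use hpos alpha_pos[of N] in simp)
  have err: "(h * d)^2 * exp (h * d) \<le> h * (r0 / 4)"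
  proof -
    have "(h * d)^2 * exp (h * d) \<le> (h * d)^2 * exp d"
      using h1 d1 hpos by (intro mult_left_mono) (auto simp: mult_left_le_one_le)
    also have "\<dots> = h * (h * C)" unfolding C_def by (simp add: power2_eq_square)
    also have "\<dots> \<le> h * (r0 / 4)" using hC hpos by (intro mult_left_mono) auto
    finally show ?thesis .
  qed
  have edge: "\<forall>\<^sub>F N in sequentially. P N a b \<ge> p0" if ab: "(a, b) \<in> G" for a b
  proof -
    have anb: "a \<noteq> b" and rl: "Rlim R a b > 0" using ab unfolding G_def by auto
    have "Rlim R a b / 2 < Rlim R a b" using rl by simp
    then have ev: "\<forall>\<^sub>F N in sequentially. Rlim R a b / 2 < alpha R N * R N a b"
      by (rule order_tendstoD(1)[OF conv[OF anb]])
    show ?thesis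
    proof (rule eventually_mono[OF ev])
      fix N assume N: "Rlim R a b / 2 < alpha R N * R N a b"
      have low: "P N a b \<ge> h * alpha R N * R N a b - (h * d)^2 * exp (h * d)"
        unfolding P_def d_def by (rule trans_fn_lower[OF Qb]) (use hpos anb in auto)
      have "h * (r0 / 2) \<le> h * (alpha R N * R N a b)"
        using N r0le[OF ab] hpos by (intro mult_left_mono) auto
      then have "P N a b \<ge> h * (r0/2) - h * (r0/4)" using low err by (simp add: mult.assoc)
      then show "P N a b \<ge> p0" unfolding p0_def by (simp add: algebra_simps)
    qed
  qed
  define u where "u = (\<lambda>N m x. (Top (P N) Dl ^^ m) (\<lambda>_. 1) x)"
  have ubd: "0 \<le> u N m x \<and> u N m x \<le> 1" for N m x
    unfolding u_def by (rule Top_bounds[of "P N", OF Pnn Psum])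
  have step: "x \<in> E \<or> (\<exists>j. \<forall>\<^sub>F N in sequentially. u N j x \<le> 1 - p0 ^ j)"
    if "(x, e) \<in> G\<^sup>*" "e \<in> E" for x e
    using that(1)
  proof (induction rule: converse_rtrancl_induct)
    case base then show ?case using that(2) by simp
  next
    case (step x y)
    show ?case
    proof (cases "x \<in> E")
      case True then show ?thesis by simp
    next
      case xE: False
      have evP: "\<forall>\<^sub>F N in sequentially. P N x y \<ge> p0" by (rule edge) (use step(1) in simp)
      have xy: "x \<noteq> y" using step(1) unfolding G_def by simp
      have sumrest: "(\<Sum>z\<in>UNIV - {y}. P N x z) \<le> 1 - P N x y" for N
      proof -
        have "(\<Sum>z\<in>UNIV. P N x z) = P N x y + (\<Sum>z\<in>UNIV - {y}. P N x z)"
          by (rule sum.remove) auto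
        then show ?thesis using Psum[of N x] by linarith
      qed
      show ?thesis
      proof (cases "y \<in> E")
        case True
        have "\<forall>\<^sub>F N in sequentially. u N 1 x \<le> 1 - p0 ^ 1"
        proof (rule eventually_mono[OF evP])
          fix N assume pN: "P N x y \<ge> p0"
          have "u N 1 x = (\<Sum>z\<in>Dl. P N x z * 1)" unfolding u_def One_nat_def Top_Suc by simp
          also have "\<dots> \<le> (\<Sum>z\<in>UNIV - {y}. P N x z)"
            by simp (rule sum_mono2, use True Pnn in \<open>auto simp: Dl_def\<close>)
          also have "\<dots> \<le> 1 - p0 ^ 1" using sumrest[of N] pN by simp
          finally show "u N 1 x \<le> 1 - p0 ^ 1" .
        qed
        then show ?thesis by blast
      next
        case yE: False
        then obtain j where j: "\<forall>\<^sub>F N in sequentially. u N j y \<le> 1 - p0 ^ j" using step(3) by blast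
        have "\<forall>\<^sub>F N in sequentially. u N (Suc j) x \<le> 1 - p0 ^ Suc j"
        proof (rule eventually_mono[OF eventually_conj[OF evP j]])
          fix N assume N: "P N x y \<ge> p0 \<and> u N j y \<le> 1 - p0 ^ j"
          have yD: "y \<in> Dl" using yE unfolding Dl_def by simp
          have "u N (Suc j) x = (\<Sum>z\<in>Dl. P N x z * u N j z)" unfolding u_def Top_Suc ..
          also have "\<dots> = P N x y * u N j y + (\<Sum>z\<in>Dl - {y}. P N x z * u N j z)"
            by (rule sum.remove[OF fDl yD])
          also have "(\<Sum>z\<in>Dl - {y}. P N x z * u N j z) \<le> (\<Sum>z\<in>Dl - {y}. P N x z)"
            by (rule sum_mono) (use Pnn ubd in \<open>auto intro: mult_left_le\<close>)
          also have "(\<Sum>z\<in>Dl - {y}. P N x z) \<le> (\<Sum>z\<in>UNIV - {y}. P N x z)"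
            by (rule sum_mono2) (use Pnn in auto)
          also have "P N x y * u N j y \<le> P N x y * (1 - p0 ^ j)"
            using N Pnn by (intro mult_left_mono) auto
          finally have "u N (Suc j) x \<le> P N x y * (1 - p0 ^ j) + (1 - P N x y)"
            using sumrest[of N] by linarith
          also have "\<dots> = 1 - P N x y * p0 ^ j" by (simp add: algebra_simps)
          also have "\<dots> \<le> 1 - p0 * p0 ^ j"
            using N p0pos by (simp add: mult_right_mono)
          finally show "u N (Suc j) x \<le> 1 - p0 ^ Suc j" by simp
        qed
        then show ?thesis by blast
      qed
    qed
  qed
  have exj: "\<forall>x\<in>Dl. \<exists>j. \<forall>\<^sub>F N in sequentially. u N j x \<le> 1 - p0 ^ j"
  proof
    fix x assume xD: "x \<in> Dl"
    obtain e where e: "e \<in> E" "(x, e) \<in> reach (Rlim R)"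
      using reach_recurrent[of "Rlim R" x] unfolding E_def by blast
    have "x \<notin> E" using xD unfolding Dl_def by simp
    then show "\<exists>j. \<forall>\<^sub>F N in sequentially. u N j x \<le> 1 - p0 ^ j"
      using step[of x e] e reachG by auto
  qed
  then obtain J where J: "\<forall>x\<in>Dl. \<forall>\<^sub>F N in sequentially. u N (J x) x \<le> 1 - p0 ^ J x"
    by metis
  define m where "m = Max (J ` Dl)"
  have Jm: "J x \<le> m" if "x \<in> Dl" for x unfolding m_def using that fDl by simp
  define \<epsilon> where "\<epsilon> = p0 ^ m"
  have eps: "0 < \<epsilon>" "\<epsilon> \<le> 1" unfolding \<epsilon>_def using p0pos p01 by (auto simp: power_le_one)
  have evall: "\<forall>\<^sub>F N in sequentially. \<forall>x\<in>Dl. u N (J x) x \<le> 1 - p0 ^ J x"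
    using eventually_ball_finite[OF fDl J] .
  have good: "\<forall>x\<in>Dl. u N (k * m) x \<le> (1 - \<epsilon>) ^ k"
    if N: "\<forall>x\<in>Dl. u N (J x) x \<le> 1 - p0 ^ J x" for N k
  proof -
    have um: "u N m x \<le> 1 - \<epsilon>" if xD: "x \<in> Dl" for x
    proof -
      have "u N m x \<le> u N (J x) x"
        unfolding u_def by (rule Top_antimono[of "P N", OF Pnn Psum Jm[OF xD] xD])
      also have "\<dots> \<le> 1 - p0 ^ J x" using N xD by blast
      also have "\<dots> \<le> 1 - \<epsilon>" unfolding \<epsilon>_def
        using power_decreasing[OF Jm[OF xD], of p0] p0pos p01 by simp
      finally show ?thesis .
    qed
    show ?thesis
    proof (induction k)
      case 0 then show ?case using ubd by (simp add: u_def)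
    next
      case (Suc k)
      show ?case
      proof
        fix x assume xD: "x \<in> Dl"
        have "u N (Suc k * m) x = (Top (P N) Dl ^^ m) ((Top (P N) Dl ^^ (k * m)) (\<lambda>_. 1)) x"
          unfolding u_def by (simp add: funpow_add)
        also have "\<dots> \<le> (Top (P N) Dl ^^ m) (\<lambda>z. (1 - \<epsilon>) ^ k * 1) x"
          using Top_mono[of "P N" Dl "(Top (P N) Dl ^^ (k * m)) (\<lambda>_. 1)" "\<lambda>z. (1 - \<epsilon>) ^ k * 1" m, OF Pnn]
            Suc xD unfolding u_def by simp
        also have "\<dots> = (1 - \<epsilon>) ^ k * u N m x" unfolding u_def by (rule Top_homog)
        also have "\<dots> \<le> (1 - \<epsilon>) ^ k * (1 - \<epsilon>)"
          using um[OF xD] eps by (intro mult_left_mono) auto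
        finally show "u N (Suc k * m) x \<le> (1 - \<epsilon>) ^ Suc k" by (simp add: mult.commute)
      qed
    qed
  qed
  define F where "F = (\<lambda>t N. measure (M N \<eta>)
            {\<omega> \<in> space (M N \<eta>). hit (X N \<eta>) (recurrent_states (Rlim R)) \<omega> \<ge> ereal (t * alpha R N)})"
  have Fbound: "F t N \<le> u N n \<eta>" if tn: "real n * h < t" for t N n
  proof -
    define \<delta> where "\<delta> = h * alpha R N"
    have dpos: "\<delta> > 0" unfolding \<delta>_def using hpos alpha_pos[of N] by simp
    have sub: "{\<omega> \<in> space (M N \<eta>). hit (X N \<eta>) (recurrent_states (Rlim R)) \<omega> \<ge> ereal (t * alpha R N)}
        \<subseteq> {\<omega>\<in>space (M N \<eta>). \<forall>i\<in>{1..n}. X N \<eta> (real i * \<delta>) \<omega> \<in> Dl}"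
    proof (safe)
      fix \<omega> i assume w: "\<omega> \<in> space (M N \<eta>)" and hge: "ereal (t * alpha R N) \<le> hit (X N \<eta>) (recurrent_states (Rlim R)) \<omega>"
        and i: "i \<in> {1..n}"
      show "X N \<eta> (real i * \<delta>) \<omega> \<in> Dl"
      proof (rule ccontr)
        assume "X N \<eta> (real i * \<delta>) \<omega> \<notin> Dl"
        then have inE: "X N \<eta> (real i * \<delta>) \<omega> \<in> recurrent_states (Rlim R)" unfolding Dl_def E_def by simp
        have ipos: "real i * \<delta> > 0" using i dpos by simp
        have "hit (X N \<eta>) (recurrent_states (Rlim R)) \<omega> \<le> ereal (real i * \<delta>)"
          unfolding hit_def by (rule Inf_lower) (use inE ipos in auto)
        moreover have "real i * \<delta> < t * alpha R N"
        proof -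
          have "real i * \<delta> \<le> real n * \<delta>" using i dpos by (intro mult_right_mono) auto
          also have "\<dots> = (real n * h) * alpha R N" unfolding \<delta>_def by simp
          also have "\<dots> < t * alpha R N" using tn alpha_pos[of N] by (intro mult_strict_right_mono) auto
          finally show ?thesis .
        qed
        ultimately show False using hge by (metis ereal_less_eq(3) leD order_trans)
      qed
    qed
    have "F t N \<le> (\<Sum>ys\<in>Lset Dl n. pathw (trans_fn (R N) \<delta>) \<eta> ys)"
      unfolding F_def by (rule measure_paths[OF chain dpos sub])
    also have "\<dots> = u N n \<eta>" unfolding u_def P_def \<delta>_def by (rule Top_paths[OF fDl, symmetric])
    finally show ?thesis .
  qed
  show ?thesis
  proof (rule order_tendstoI)
    fix a :: ereal assume "a < 0"
    have z: "0 \<le> limsup (\<lambda>N. ereal (F t N))" for t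
      by (rule le_Limsup) (simp_all add: F_def)
    show "\<forall>\<^sub>F t in at_top. a < limsup (\<lambda>N. ereal (measure (M N \<eta>)
            {\<omega> \<in> space (M N \<eta>). hit (X N \<eta>) (recurrent_states (Rlim R)) \<omega> \<ge> ereal (t * alpha R N)}))"
    proof (intro always_eventually allI)
      fix t
      show "a < limsup (\<lambda>N. ereal (measure (M N \<eta>)
            {\<omega> \<in> space (M N \<eta>). hit (X N \<eta>) (recurrent_states (Rlim R)) \<omega> \<ge> ereal (t * alpha R N)}))"
        using less_le_trans[OF \<open>a < 0\<close> z[of t, unfolded F_def]] .
    qed
  next
    fix a :: ereal assume apos: "0 < a"
    obtain k where k: "ereal ((1 - \<epsilon>) ^ k) < a"
    proof (cases a)
      case (real r)
      then have "r > 0" using apos by simp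
      then obtain k where "(1 - \<epsilon>) ^ k < r" using real_arch_pow_inv[of r "1 - \<epsilon>"] eps by auto
      then show ?thesis using that[of k] real by simp
    next
      case PInf then show ?thesis using that[of 0] by simp
    next
      case MInf then show ?thesis using apos by simp
    qed
    have "\<forall>\<^sub>F t in at_top. real (k * m) * h < t" by (rule eventually_gt_at_top)
    then show "\<forall>\<^sub>F t in at_top. limsup (\<lambda>N. ereal (measure (M N \<eta>)
            {\<omega> \<in> space (M N \<eta>). hit (X N \<eta>) (recurrent_states (Rlim R)) \<omega> \<ge> ereal (t * alpha R N)})) < a"
    proof (rule eventually_mono)
      fix t assume t: "real (k * m) * h < t"
      have "\<forall>\<^sub>F N in sequentially. ereal (F t N) \<le> ereal ((1 - \<epsilon>) ^ k)"
      proof (rule eventually_mono[OF evall])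
        fix N assume N: "\<forall>x\<in>Dl. u N (J x) x \<le> 1 - p0 ^ J x"
        have "F t N \<le> u N (k * m) \<eta>" by (rule Fbound[OF t])
        also have "\<dots> \<le> (1 - \<epsilon>) ^ k" using good[OF N, of k] etaD by blast
        finally show "ereal (F t N) \<le> ereal ((1 - \<epsilon>) ^ k)" by simp
      qed
      then have L: "limsup (\<lambda>N. ereal (F t N)) \<le> ereal ((1 - \<epsilon>) ^ k)" by (rule Limsup_bounded)
      show "limsup (\<lambda>N. ereal (measure (M N \<eta>)
            {\<omega> \<in> space (M N \<eta>). hit (X N \<eta>) (recurrent_states (Rlim R)) \<omega> \<ge> ereal (t * alpha R N)})) < a"
        using le_less_trans[OF L[unfolded F_def] k] .
    qed
  qed
qed

end
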